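(* Let $H\in(0,1/2)$, $\lambda,\theta>0$, and define for $\tau\ge0$ $$R_Y(\tau)=\theta^2\Big(\frac{\Gamma(2H+1)\cosh(\lambda\tau)}{2\lambda^{2H}}-H\int_0^\tau\cosh(\lambda(\tau-u))\,u^{2H-1}\,\mathsf{d}u\Big).$$ Then $R_Y\in\mathcal{C}^\infty((0,\infty);\mathbb{R})$ and $$R_Y(\tau)=R_Y(0)-\frac{\theta^2}{2}\tau^{2H}+o(\tau^{2H}),\qquad\tau\to0.$$
   Context: $R_Y$ is the covariance function of the stationary fractional Ornstein–Uhlenbeck process $Y_t=\mu+\theta e^{-\lambda t}\int_{-\infty}^te^{\lambda s}\,\mathsf{d}B_s$ driven by a fractional Brownian motion $B$ with Hurst parameter $H$, i.e. $\mathbf{E}(Y_s-\mu)(Y_t-\mu)=R_Y(|t-s|)$. *)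

theory Defs
  imports "HOL-Analysis.Analysis" "HOL-Library.Landau_Symbols"
begin

definition R_Y :: "real \<Rightarrow> real \<Rightarrow> real \<Rightarrow> real \<Rightarrow> real" where
  "R_Y H lam \<theta> \<tau> = \<theta>\<^sup>2 * (Gamma (2*H + 1) * cosh (lam * \<tau>) / (2 * lam powr (2*H))
      - H * integral {0..\<tau>} (\<lambda>u. cosh (lam * (\<tau> - u)) * u powr (2*H - 1)))"

definition smooth_on :: "real set \<Rightarrow> (real \<Rightarrow> real) \<Rightarrow> bool" where
  "smooth_on S f \<longleftrightarrow> (\<forall>n. \<forall>x\<in>S. ((deriv ^^ n) f) field_differentiable (at x))"

end

theory Submission imports Defs "HOL-Real_Asymp.Real_Asymp" begin

definition su :: "nat \<Rightarrow> real set \<Rightarrow> (real \<Rightarrow> real) \<Rightarrow> bool" where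
  "su k S f \<longleftrightarrow> (\<forall>m\<le>k. \<forall>x\<in>S. (deriv ^^ m) f field_differentiable (at x))"

lemma deriv_pow_cong:
  assumes "open S" "\<forall>x\<in>S. f x = g x" "x \<in> S"
  shows "(deriv ^^ n) f x = (deriv ^^ n) g x"
  using assms(3)
proof (induction n arbitrary: x)
  case 0 then show ?case using assms(2) by simp
next
  case (Suc n)
  have "eventually (\<lambda>y. y \<in> S) (nhds x)" by (rule eventually_nhds_in_open[OF assms(1) Suc.prems])
  hence "eventually (\<lambda>y. (deriv ^^ n) f y = (deriv ^^ n) g y) (nhds x)"
    by (rule eventually_mono) (use Suc.IH in auto)
  then show ?case by (simp add: deriv_cong_ev)
qed

lemma fd_transfer:
  assumes "open S" "\<forall>x\<in>S. f x = g x" "x \<in> S" "g field_differentiable (at x)"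
  shows "f field_differentiable (at x)"
proof -
  obtain D where "(g has_field_derivative D) (at x)" using assms(4) unfolding field_differentiable_def by blast
  hence "(f has_field_derivative D) (at x)"
    by (rule has_field_derivative_transform_within_open[OF _ assms(1,3)]) (use assms(2) in auto)
  thus ?thesis unfolding field_differentiable_def by blast
qed

lemma su_cong:
  assumes "open S" "su k S g" "\<forall>x\<in>S. f x = g x"
  shows "su k S f"
  unfolding su_def
proof (intro allI impI ballI)
  fix m x assume m: "m \<le> k" and x: "x \<in> S"
  have "\<forall>y\<in>S. (deriv^^m) f y = (deriv^^m) g y" using deriv_pow_cong[OF assms(1) assms(3)] by blast
  moreover have "(deriv^^m) g field_differentiable at x" using assms(2) m x unfolding su_def by blast
  ultimately show "(deriv^^m) f field_differentiable at x" using fd_transfer[OF assms(1)] x by blast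
qed

lemma deriv_pow_add:
  assumes "open S" "su k S f" "su k S g" "m \<le> Suc k" "x \<in> S"
  shows "(deriv^^m) (\<lambda>x. f x + g x) x = (deriv^^m) f x + (deriv^^m) g x"
  using assms(4,5)
proof (induction m arbitrary: x)
  case 0 thus ?case by simp
next
  case (Suc m)
  have "eventually (\<lambda>y. y \<in> S) (nhds x)" by (rule eventually_nhds_in_open[OF assms(1) Suc.prems(2)])
  hence ev: "eventually (\<lambda>y. (deriv ^^ m) (\<lambda>x. f x + g x) y = (deriv ^^ m) f y + (deriv ^^ m) g y) (nhds x)"
    by (rule eventually_mono) (use Suc.IH Suc.prems(1) in auto)
  have df: "(deriv^^m) f field_differentiable at x" "(deriv^^m) g field_differentiable at x"
    using assms(2,3) Suc.prems unfolding su_def by auto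
  have "(deriv^^Suc m) (\<lambda>x. f x + g x) x = deriv (\<lambda>y. (deriv ^^ m) f y + (deriv ^^ m) g y) x"
    by (simp add: deriv_cong_ev[OF ev refl])
  also have "\<dots> = deriv ((deriv ^^ m) f) x + deriv ((deriv ^^ m) g) x"
    by (rule deriv_add[OF df])
  finally show ?case by simp
qed

lemma su_add:
  assumes "open S" "su k S f" "su k S g"
  shows "su k S (\<lambda>x. f x + g x)"
  unfolding su_def
proof (intro allI impI ballI)
  fix m x assume m: "m \<le> k" and x: "x \<in> S"
  have eq: "\<forall>y\<in>S. (deriv^^m) (\<lambda>x. f x + g x) y = (\<lambda>y. (deriv^^m) f y + (deriv^^m) g y) y"
    using deriv_pow_add[OF assms] m by simp
  have "(\<lambda>y. (deriv^^m) f y + (deriv^^m) g y) field_differentiable at x"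
    using assms(2,3) m x unfolding su_def by (auto intro!: field_differentiable_add)
  then show "(deriv^^m) (\<lambda>x. f x + g x) field_differentiable at x"
    using fd_transfer[OF assms(1) eq x] by blast
qed

lemma su_deriv:
  assumes "open S" "\<forall>x\<in>S. f field_differentiable at x" "su k S g" "\<forall>x\<in>S. deriv f x = g x"
  shows "su (Suc k) S f"
  unfolding su_def
proof (intro allI impI ballI)
  fix m x assume m: "m \<le> Suc k" and x: "x \<in> S"
  show "(deriv^^m) f field_differentiable at x"
  proof (cases m)
    case 0 thus ?thesis using assms(2) x by simp
  next
    case (Suc m')
    have "su k S (deriv f)" using su_cong[OF assms(1,3,4)] .
    hence "(deriv^^m') (deriv f) field_differentiable at x" using m x Suc unfolding su_def by auto
    moreover have "(deriv^^m) f = (deriv^^m') (deriv f)" using Suc by (simp add: funpow_Suc_right del: funpow.simps)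
    ultimately show ?thesis by simp
  qed
qed

lemma su_zero:
  assumes "\<forall>x\<in>S. f field_differentiable at x"
  shows "su 0 S f"
  using assms unfolding su_def by simp

lemma su_smooth:
  assumes "\<And>k. su k S f"
  shows "smooth_on S f"
  using assms unfolding su_def smooth_on_def by blast

lemma powr_der: "(x::real) > 0 \<Longrightarrow> ((\<lambda>x. c * x powr a) has_field_derivative (c*a) * x powr (a-1)) (at x)"
  using DERIV_cmult[OF has_real_derivative_powr, of x c a] by (simp add: mult.assoc)

lemma su_powr: "su k {0<..} (\<lambda>x. c * x powr a)"
proof (induction k arbitrary: c a)
  note d = powr_der
  {
    case 0
    show ?case using d by (intro su_zero) (auto simp: field_differentiable_def)
  next
    case (Suc k)
    show ?case
      by (rule su_deriv[OF _ _ Suc.IH[of "c*a" "a-1"]]) (use d in \<open>auto simp: field_differentiable_def intro: DERIV_imp_deriv\<close>)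
  }
qed

lemma su_cs: "su k {0<..} (\<lambda>x. \<alpha> * cosh (l*x) + \<beta> * sinh (l*x))"
proof (induction k arbitrary: \<alpha> \<beta>)
  have d: "\<And>x \<alpha> \<beta>. ((\<lambda>x. \<alpha> * cosh (l*x) + \<beta> * sinh (l*x)) has_field_derivative (\<beta>*l) * cosh (l*x) + (\<alpha>*l) * sinh (l*x)) (at x)"
    by (auto intro!: derivative_eq_intros simp: algebra_simps)
  {
    case 0
    show ?case using d by (intro su_zero) (auto simp: field_differentiable_def)
  next
    case (Suc k)
    show ?case
      by (rule su_deriv[OF _ _ Suc.IH[of "\<beta>*l" "\<alpha>*l"]]) (use d in \<open>auto simp: field_differentiable_def intro: DERIV_imp_deriv\<close>)
  }
qed

lemma su_UV:
  fixes A B :: "real \<Rightarrow> real"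
  assumes dA: "\<And>x. x > 0 \<Longrightarrow> (A has_real_derivative cosh (l*x) * x powr a) (at x)"
      and dB: "\<And>x. x > 0 \<Longrightarrow> (B has_real_derivative sinh (l*x) * x powr a) (at x)"
  shows "su k {0<..} (\<lambda>x. \<alpha> * (cosh (l*x) * A x - sinh (l*x) * B x) + \<beta> * (sinh (l*x) * A x - cosh (l*x) * B x))"
proof (induction k arbitrary: \<alpha> \<beta>)
  have d: "\<And>x \<alpha> \<beta>. x > 0 \<Longrightarrow> ((\<lambda>x. \<alpha> * (cosh (l*x) * A x - sinh (l*x) * B x) + \<beta> * (sinh (l*x) * A x - cosh (l*x) * B x))
     has_field_derivative ((\<beta>*l) * (cosh (l*x) * A x - sinh (l*x) * B x) + (\<alpha>*l) * (sinh (l*x) * A x - cosh (l*x) * B x)) + \<alpha> * x powr a) (at x)"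
  proof -
    fix x \<alpha> \<beta> :: real assume x: "x > 0"
    have c1: "cosh (l*x) * cosh (l*x) = 1 + sinh (l*x) * sinh (l*x)"
      using cosh_square_eq[of "l*x"] by (simp add: power2_eq_square)
    have "((\<lambda>x. \<alpha> * (cosh (l*x) * A x - sinh (l*x) * B x) + \<beta> * (sinh (l*x) * A x - cosh (l*x) * B x))
     has_field_derivative \<alpha> * ((sinh (l*x) * l) * A x + cosh (l*x) * (cosh (l*x) * x powr a) - ((cosh (l*x) * l) * B x + sinh (l*x) * (sinh (l*x) * x powr a)))
        + \<beta> * ((cosh (l*x) * l) * A x + sinh (l*x) * (cosh (l*x) * x powr a) - ((sinh (l*x) * l) * B x + cosh (l*x) * (sinh (l*x) * x powr a)))) (at x)"
      by (auto intro!: derivative_eq_intros dA dB x)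
    moreover have "\<alpha> * ((sinh (l*x) * l) * A x + cosh (l*x) * (cosh (l*x) * x powr a) - ((cosh (l*x) * l) * B x + sinh (l*x) * (sinh (l*x) * x powr a)))
        + \<beta> * ((cosh (l*x) * l) * A x + sinh (l*x) * (cosh (l*x) * x powr a) - ((sinh (l*x) * l) * B x + cosh (l*x) * (sinh (l*x) * x powr a)))
      = ((\<beta>*l) * (cosh (l*x) * A x - sinh (l*x) * B x) + (\<alpha>*l) * (sinh (l*x) * A x - cosh (l*x) * B x)) + \<alpha> * x powr a"
      by (simp add: algebra_simps c1)
    ultimately show "?thesis x \<alpha> \<beta>" by simp
  qed
  {
    case 0
    show ?case using d by (intro su_zero) (auto simp: field_differentiable_def)
  next
    case (Suc k)
    have s: "su k {0<..} (\<lambda>x. ((\<beta>*l) * (cosh (l*x) * A x - sinh (l*x) * B x) + (\<alpha>*l) * (sinh (l*x) * A x - cosh (l*x) * B x)) + \<alpha> * x powr a)"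
      by (rule su_add[OF _ Suc.IH[of "\<beta>*l" "\<alpha>*l"] su_powr]) auto
    show ?case
      by (rule su_deriv[OF _ _ s]) (use d in \<open>auto simp: field_differentiable_def intro: DERIV_imp_deriv\<close>)
  }
qed

lemma lim1: "0 < H \<Longrightarrow> H < 1/2 \<Longrightarrow> 0 < (lam::real) \<Longrightarrow> ((\<lambda>\<tau>::real. (cosh(lam*\<tau>) - 1)/\<tau> powr (2*H)) \<longlongrightarrow> 0) (at_right 0)"
  unfolding cosh_def scaleR_conv_of_real by real_asymp

lemma lim2: "0 < (lam::real) \<Longrightarrow> ((\<lambda>\<tau>::real. (cosh(lam*\<tau>) - 1)) \<longlongrightarrow> 0) (at_right 0)"
  unfolding cosh_def scaleR_conv_of_real by real_asymp

lemma intg: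
  fixes g :: "real \<Rightarrow> real"
  assumes "continuous_on {0..b} g" "a > -1" "b \<ge> 0"
  shows "(\<lambda>u. g u * u powr a) integrable_on {0..b}"
proof -
  have "(\<lambda>u. g u * u powr a) absolutely_integrable_on {0..b}"
  proof (rule absolutely_integrable_bounded_measurable_product_real)
    show "g \<in> borel_measurable (lebesgue_on {0..b})"
      by (rule continuous_imp_measurable_on_sets_lebesgue[OF assms(1)]) auto
    show "bounded (g ` {0..b})" using compact_continuous_image[OF assms(1)] compact_imp_bounded by auto
    show "(\<lambda>u. u powr a) absolutely_integrable_on {0..b}"
      by (rule nonnegative_absolutely_integrable_1[OF integrable_on_powr_from_0[OF assms(2,3)]]) auto
  qed auto
  thus ?thesis using set_lebesgue_integral_eq_integral(1) absolutely_integrable_on_def by blast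
qed

lemma deriv_int:
  fixes g :: "real \<Rightarrow> real"
  assumes g: "continuous_on UNIV g" and a: "a > -1" and t: "t > 0"
  shows "((\<lambda>\<tau>. integral {0..\<tau>} (\<lambda>u. g u * u powr a)) has_real_derivative g t * t powr a) (at t)"
proof -
  have int: "(\<lambda>u. g u * u powr a) integrable_on {0..2*t}"
    by (rule intg) (use g a t in \<open>auto intro: continuous_on_subset\<close>)
  have "isCont g t" using g by (simp add: continuous_on_eq_continuous_at)
  hence "isCont (\<lambda>u. g u * u powr a) t" using t by (auto intro!: continuous_intros)
  hence cont: "continuous (at t within ({0..2*t} - {})) (\<lambda>u. g u * u powr a)"
    using continuous_at_imp_continuous_at_within by blast
  have "((\<lambda>\<tau>. integral {0..\<tau>} (\<lambda>u. g u * u powr a)) has_vector_derivative g t * t powr a) (at t within ({0..2*t} - {}))"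
    by (rule integral_has_vector_derivative_continuous_at[OF int _ _ cont]) (use t in auto)
  moreover have "at t within ({0..2*t} - {}) = at t"
    by (rule at_within_interior) (use t in auto)
  ultimately show ?thesis by (simp add: has_real_derivative_iff_has_vector_derivative)
qed

lemma R_eq:
  fixes H lam \<theta> \<tau> :: real
  assumes "0 < H" "0 \<le> \<tau>"
  shows "R_Y H lam \<theta> \<tau> = \<theta>\<^sup>2 * (Gamma (2*H + 1) / (2 * lam powr (2*H)) * cosh (lam * \<tau>)
     - H * (cosh (lam*\<tau>) * integral {0..\<tau>} (\<lambda>u. cosh (lam*u) * u powr (2*H-1))
          - sinh (lam*\<tau>) * integral {0..\<tau>} (\<lambda>u. sinh (lam*u) * u powr (2*H-1))))"
proof -
  have a: "2*H - 1 > -1" using assms by simp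
  have i1: "(\<lambda>u. cosh (lam*u) * u powr (2*H-1)) integrable_on {0..\<tau>}"
    by (rule intg[OF _ a assms(2)]) (auto intro!: continuous_intros)
  have i2: "(\<lambda>u. sinh (lam*u) * u powr (2*H-1)) integrable_on {0..\<tau>}"
    by (rule intg[OF _ a assms(2)]) (auto intro!: continuous_intros)
  have "integral {0..\<tau>} (\<lambda>u. cosh (lam * (\<tau> - u)) * u powr (2*H - 1))
      = integral {0..\<tau>} (\<lambda>u. cosh (lam*\<tau>) * (cosh (lam*u) * u powr (2*H-1)) - sinh (lam*\<tau>) * (sinh (lam*u) * u powr (2*H-1)))"
    by (rule integral_cong) (simp add: right_diff_distrib cosh_diff algebra_simps)
  also have "\<dots> = cosh (lam*\<tau>) * integral {0..\<tau>} (\<lambda>u. cosh (lam*u) * u powr (2*H-1))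
          - sinh (lam*\<tau>) * integral {0..\<tau>} (\<lambda>u. sinh (lam*u) * u powr (2*H-1))"
    by (simp add: integral_diff[OF integrable_on_mult_right[OF i1] integrable_on_mult_right[OF i2]])
  finally show ?thesis unfolding R_Y_def by simp
qed

theorem lemma2:
  fixes H lam \<theta> :: real
  assumes "0 < H" "H < 1/2" "0 < lam" "0 < \<theta>"
  shows "smooth_on {0<..} (R_Y H lam \<theta>)
    \<and> (\<lambda>\<tau>. R_Y H lam \<theta> \<tau> - (R_Y H lam \<theta> 0 - \<theta>\<^sup>2 / 2 * \<tau> powr (2*H)))
        \<in> o[at_right 0](\<lambda>\<tau>. \<tau> powr (2*H))"
proof -
  define K where "K = Gamma (2*H + 1) / (2 * lam powr (2*H))"
  define A where "A = (\<lambda>\<tau>. integral {0..\<tau>} (\<lambda>u. cosh (lam*u) * u powr (2*H-1)))"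
  define B where "B = (\<lambda>\<tau>. integral {0..\<tau>} (\<lambda>u. sinh (lam*u) * u powr (2*H-1)))"
  have a: "2*H - 1 > -1" using assms by simp
  have Req: "\<And>\<tau>. \<tau> \<ge> 0 \<Longrightarrow> R_Y H lam \<theta> \<tau> = \<theta>\<^sup>2 * (K * cosh (lam * \<tau>) - H * (cosh (lam*\<tau>) * A \<tau> - sinh (lam*\<tau>) * B \<tau>))"
    using R_eq[OF assms(1)] unfolding K_def A_def B_def by simp
  have S1: "smooth_on {0<..} (R_Y H lam \<theta>)"
  proof (rule su_smooth)
    fix k
    have dA: "\<And>x. x > 0 \<Longrightarrow> (A has_real_derivative cosh (lam*x) * x powr (2*H-1)) (at x)"
      unfolding A_def by (rule deriv_int[OF _ a]) (auto intro!: continuous_intros)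
    have dB: "\<And>x. x > 0 \<Longrightarrow> (B has_real_derivative sinh (lam*x) * x powr (2*H-1)) (at x)"
      unfolding B_def by (rule deriv_int[OF _ a]) (auto intro!: continuous_intros)
    have "su k {0<..} (\<lambda>x. (\<theta>\<^sup>2 * K * cosh (lam*x) + 0 * sinh (lam*x)) +
       ((- \<theta>\<^sup>2 * H) * (cosh (lam*x) * A x - sinh (lam*x) * B x) + 0 * (sinh (lam*x) * A x - cosh (lam*x) * B x)))"
      by (rule su_add[OF _ su_cs su_UV[OF dA dB]]) auto
    thus "su k {0<..} (R_Y H lam \<theta>)"
      by (rule su_cong[OF open_greaterThan]) (auto simp: Req algebra_simps)
  qed
  have S2: "(\<lambda>\<tau>. R_Y H lam \<theta> \<tau> - (R_Y H lam \<theta> 0 - \<theta>\<^sup>2 / 2 * \<tau> powr (2*H)))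
        \<in> o[at_right 0](\<lambda>\<tau>. \<tau> powr (2*H))"
  proof -
    define f where "f = (\<lambda>\<tau>. R_Y H lam \<theta> \<tau> - (R_Y H lam \<theta> 0 - \<theta>\<^sup>2 / 2 * \<tau> powr (2*H)))"
    define b where "b = (\<lambda>\<tau>. \<theta>\<^sup>2*K*((cosh(lam*\<tau>)-1)/\<tau> powr (2*H)) + \<theta>\<^sup>2*H/(2*H) * (cosh(lam*\<tau>)-1))"
    have K0: "K \<ge> 0" unfolding K_def using assms by simp
    have R0: "R_Y H lam \<theta> 0 = \<theta>\<^sup>2 * K" using Req[of 0] by (simp add: A_def B_def)
    have bound: "\<bar>f \<tau>\<bar> \<le> \<theta>\<^sup>2*K*(cosh(lam*\<tau>)-1) + \<theta>\<^sup>2*H*((cosh(lam*\<tau>)-1)*\<tau> powr (2*H)/(2*H))"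
      if t: "\<tau> > 0" for \<tau>
    proof -
      define I where "I = integral {0..\<tau>} (\<lambda>u. cosh (lam * (\<tau> - u)) * u powr (2*H - 1))"
      define J where "J = integral {0..\<tau>} (\<lambda>u. (cosh (lam * (\<tau> - u)) - 1) * u powr (2*H - 1))"
      have RI: "R_Y H lam \<theta> \<tau> = \<theta>\<^sup>2 * (K * cosh (lam*\<tau>) - H * I)"
        unfolding R_Y_def K_def I_def by simp
      have hP: "((\<lambda>u. u powr (2*H-1)) has_integral (\<tau> powr (2*H) / (2*H))) {0..\<tau>}"
        using has_integral_powr_from_0[OF a, of \<tau>] t by simp
      have iP: "(\<lambda>u. u powr (2*H-1)) integrable_on {0..\<tau>}" using hP by blast
      have P: "integral {0..\<tau>} (\<lambda>u. u powr (2*H-1)) = \<tau> powr (2*H) / (2*H)" using hP by blast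
      have iI: "(\<lambda>u. cosh (lam * (\<tau> - u)) * u powr (2*H - 1)) integrable_on {0..\<tau>}"
        by (rule intg[OF _ a]) (use t in \<open>auto intro!: continuous_intros\<close>)
      have iJ: "(\<lambda>u. (cosh (lam * (\<tau> - u)) - 1) * u powr (2*H - 1)) integrable_on {0..\<tau>}"
        by (rule intg[OF _ a]) (use t in \<open>auto intro!: continuous_intros\<close>)
      have "J = integral {0..\<tau>} (\<lambda>u. cosh (lam * (\<tau> - u)) * u powr (2*H - 1) - u powr (2*H-1))"
        unfolding J_def by (rule integral_cong) (simp add: algebra_simps)
      also have "\<dots> = I - \<tau> powr (2*H) / (2*H)"
        unfolding I_def by (simp add: integral_diff[OF iI iP] P)
      finally have JI: "J = I - \<tau> powr (2*H) / (2*H)" .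
      have J0: "J \<ge> 0" unfolding J_def
        by (rule integral_nonneg[OF iJ]) (auto intro!: mult_nonneg_nonneg simp: cosh_real_ge_1)
      have iG: "(\<lambda>u. (cosh (lam*\<tau>) - 1) * u powr (2*H - 1)) integrable_on {0..\<tau>}"
        by (rule integrable_on_mult_right[OF iP])
      have "J \<le> integral {0..\<tau>} (\<lambda>u. (cosh (lam*\<tau>) - 1) * u powr (2*H - 1))"
        unfolding J_def
      proof (rule integral_le[OF iJ iG])
        fix u assume u: "u \<in> {0..\<tau>}"
        have "cosh (lam * (\<tau> - u)) \<le> cosh (lam*\<tau>)"
          using u assms(3) by (subst cosh_real_nonneg_le_iff) (auto intro: mult_left_mono)
        thus "(cosh (lam * (\<tau> - u)) - 1) * u powr (2*H - 1) \<le> (cosh (lam*\<tau>) - 1) * u powr (2*H - 1)"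
          by (intro mult_right_mono) auto
      qed
      also have "\<dots> = (cosh(lam*\<tau>)-1)*\<tau> powr (2*H)/(2*H)" by (simp add: P)
      finally have J1: "J \<le> (cosh(lam*\<tau>)-1)*\<tau> powr (2*H)/(2*H)" .
      have fJ: "f \<tau> = \<theta>\<^sup>2*K*(cosh(lam*\<tau>)-1) - \<theta>\<^sup>2*H*J"
        unfolding f_def RI R0 JI using assms(1) by (simp add: algebra_simps)
      have c1: "cosh(lam*\<tau>) - 1 \<ge> 0" using cosh_real_ge_1 by simp
      have "0 \<le> \<theta>\<^sup>2*K*(cosh(lam*\<tau>)-1)" using K0 c1 by simp
      moreover have "0 \<le> \<theta>\<^sup>2*H*J" using J0 assms(1) by simp
      moreover have "\<theta>\<^sup>2*H*J \<le> \<theta>\<^sup>2*H*((cosh(lam*\<tau>)-1)*\<tau> powr (2*H)/(2*H))"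
        by (rule mult_left_mono[OF J1]) (use assms(1) in simp)
      ultimately show ?thesis unfolding fJ by linarith
    qed
    have blim: "(b \<longlongrightarrow> 0) (at_right 0)"
    proof -
      have "(b \<longlongrightarrow> \<theta>\<^sup>2*K*0 + \<theta>\<^sup>2*H/(2*H) * 0) (at_right 0)"
        unfolding b_def by (intro tendsto_intros lim1 lim2 assms)
      thus ?thesis by simp
    qed
    have ev: "eventually (\<lambda>\<tau>::real. 0 < \<tau>) (at_right 0)" by (simp add: eventually_at_filter)
    have "eventually (\<lambda>\<tau>. norm (f \<tau> / \<tau> powr (2*H)) \<le> norm (b \<tau>) * 1) (at_right 0)"
    proof (rule eventually_mono[OF ev])
      fix \<tau> :: real assume t: "0 < \<tau>"
      have g: "\<tau> powr (2*H) > 0" using t by simp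
      have "\<bar>f \<tau> / \<tau> powr (2*H)\<bar> = \<bar>f \<tau>\<bar> / \<tau> powr (2*H)" using g by (simp add: abs_divide)
      also have "\<dots> \<le> (\<theta>\<^sup>2*K*(cosh(lam*\<tau>)-1) + \<theta>\<^sup>2*H*((cosh(lam*\<tau>)-1)*\<tau> powr (2*H)/(2*H))) / \<tau> powr (2*H)"
        by (rule divide_right_mono[OF bound[OF t]]) (use g in simp)
      also have "\<dots> = b \<tau>" unfolding b_def using g assms(1) by (simp add: field_simps)
      also have "\<dots> \<le> \<bar>b \<tau>\<bar>" by simp
      finally show "norm (f \<tau> / \<tau> powr (2*H)) \<le> norm (b \<tau>) * 1" by simp
    qed
    hence "((\<lambda>\<tau>. f \<tau> / \<tau> powr (2*H)) \<longlongrightarrow> 0) (at_right 0)" by (rule tendsto_0_le[OF blim])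
    hence "f \<in> o[at_right 0](\<lambda>\<tau>. \<tau> powr (2*H))"
      by (rule smalloI_tendsto) (use ev in \<open>auto elim: eventually_mono\<close>)
    thus ?thesis unfolding f_def .
  qed
  show ?thesis using S1 S2 by blast
qed

end
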